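(* In the setting described in the context, for every $\alpha\in(0,1)$ and every almost surely finite $(\mathcal F_T)$-stopping time $\tau$, with $\alpha^{\mathsf B}=m\alpha/(2k)$, we have $\mathrm{sFCR}(\alpha^{\mathsf B})\le\alpha$.
   Context: Setting: $(\Omega,\mathcal F,\mathbb P)$ is a probability space with a filtration $(\mathcal F_T)_{T\in\mathbb N}$; $k\ge2$, $m\in\{1,\dots,k-1\}$, $\alpha\in(0,1)$; $\theta_1\ge\dots\ge\theta_k$ are real parameters; $[k]=\{1,\dots,k\}$. For each $i\in[k]$ and $\beta\in(0,1)$, $(L_{iT}(\beta))_{T}$ and $(U_{iT}(\beta))_T$ are $(\mathcal F_T)$-adapted processes with values in $[-\infty,\infty]$, with $L_{iT}(\beta)\le U_{iT}(\beta)$, satisfying $\mathbb P(\exists T\in\mathbb N:\theta_i\le L_{iT}(\beta))\le\beta$ and $\mathbb P(\exists T\in\mathbb N:\theta_i\ge U_{iT}(\beta))\le\beta$. No dependence assumptions across $i$. SCS procedure: set $\alpha_{km}=\alpha/\{2m(k-m)\}$, $\hat{\mathcal S}_0=[k]$, and for $T\in\mathbb N$ let $L^{(m)}_T(\alpha_{km})$ be the $m$-th largest among $\{L_{iT}(\alpha_{km}):i\in\hat{\mathcal S}_{T-1}\}$ and $\hat{\mathcal S}_T=\hat{\mathcal S}_{T-1}\setminus\{i\in\hat{\mathcal S}_{T-1}:U_{iT}(\alpha_{km})<L^{(m)}_T(\alpha_{km})\}$. Stopped false coverage rate: for a stopping time $\tau$ and a level $a\in(0,1)$, $\mathrm{sFCR}(a)=\mathbb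 E\Big[\sum_{i\in\hat{\mathcal S}_\tau}\frac{\mathbb I\{\theta_i\notin(L_{i\tau}(a),U_{i\tau}(a))\}}{|\hat{\mathcal S}_\tau|}\Big]$. *)

theory Defs
  imports "HOL-Probability.Probability" "HOL-Library.Multiset"
begin

definition mth_largest :: "nat \<Rightarrow> ereal multiset \<Rightarrow> ereal" where
  "mth_largest m A = rev (sorted_list_of_multiset A) ! (m - 1)"

text \<open>The SCS selection sets.  Here L i T \<omega> and U i T \<omega> are the bounds already
evaluated at the level used by the procedure.  Index sets are subsets of {1..k}.\<close>
fun SCS_set :: "nat \<Rightarrow> nat \<Rightarrow> (nat \<Rightarrow> nat \<Rightarrow> 'a \<Rightarrow> ereal) \<Rightarrow> (nat \<Rightarrow> nat \<Rightarrow> 'a \<Rightarrow> ereal)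
    \<Rightarrow> nat \<Rightarrow> 'a \<Rightarrow> nat set" where
  "SCS_set k m L U 0 \<omega> = {1..k}"
| "SCS_set k m L U (Suc T) \<omega> =
     (let S = SCS_set k m L U T \<omega>;
          Lm = mth_largest m (image_mset (\<lambda>i. L i (Suc T) \<omega>) (mset_set S))
      in S - {i \<in> S. U i (Suc T) \<omega> < Lm})"

text \<open>Stopped false coverage rate at level a, for selection sets S and stopping time tau.
On the (null) event tau = infinity the integrand is set to 0.\<close>
definition sFCR :: "'a measure \<Rightarrow> (nat \<Rightarrow> real \<Rightarrow> nat \<Rightarrow> 'a \<Rightarrow> ereal)
    \<Rightarrow> (nat \<Rightarrow> real \<Rightarrow> nat \<Rightarrow> 'a \<Rightarrow> ereal) \<Rightarrow> (nat \<Rightarrow> real)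
    \<Rightarrow> (nat \<Rightarrow> 'a \<Rightarrow> nat set) \<Rightarrow> ('a \<Rightarrow> enat) \<Rightarrow> real \<Rightarrow> real" where
  "sFCR M L U \<theta> S \<tau> a =
     integral\<^sup>L M (\<lambda>\<omega>. case \<tau> \<omega> of
        \<infinity> \<Rightarrow> 0
      | enat t \<Rightarrow> (\<Sum>i\<in>S t \<omega>.
            (if \<not> (L i a t \<omega> < ereal (\<theta> i) \<and> ereal (\<theta> i) < U i a t \<omega>) then 1 else 0))
          / real (card (S t \<omega>)))"

end

theory Submission
  imports Defs
begin

lemma mth_largest_count:
  fixes A :: "ereal multiset"
  assumes m: "1 \<le> m" "m \<le> size A"
  shows "m \<le> size (filter_mset (\<lambda>x. mth_largest m A \<le> x) A)"
proof -
  define xs where "xs = rev (sorted_list_of_multiset A)"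
  define P where "P = (\<lambda>x. mth_largest m A \<le> x)"
  have len: "length xs = size A" unfolding xs_def by (metis length_rev mset_sorted_list_of_multiset size_mset)
  have sr: "sorted (rev xs)" unfolding xs_def by simp
  have A: "A = mset xs" unfolding xs_def by simp
  have "\<forall>x\<in>set (take m xs). P x"
  proof
    fix x assume "x \<in> set (take m xs)"
    then obtain j where j: "j < length (take m xs)" "x = take m xs ! j" by (metis in_set_conv_nth)
    hence "j \<le> m - 1" "m - 1 < length xs" using m len by auto
    hence "xs ! (m-1) \<le> xs ! j" using sr sorted_rev_nth_mono by blast
    thus "P x" using j unfolding P_def mth_largest_def xs_def[symmetric] by simp
  qed
  hence "filter P (take m xs) = take m xs" by simp
  hence "length (filter P (take m xs)) = m" using m len by simp
  moreover have "filter P xs = filter P (take m xs) @ filter P (drop m xs)"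
    by (metis append_take_drop_id filter_append)
  ultimately have "m \<le> length (filter P xs)" by simp
  also have "length (filter P xs) = size (filter_mset P A)" using A by (metis mset_filter size_mset)
  finally show ?thesis unfolding P_def .
qed

lemma SCS_props:
  assumes m: "1 \<le> m" "m \<le> k"
    and LU: "\<And>i T. i \<in> {1..k} \<Longrightarrow> T \<ge> 1 \<Longrightarrow> L i T \<omega> \<le> U i T \<omega>"
  shows "SCS_set k m L U T \<omega> \<subseteq> {1..k} \<and> m \<le> card (SCS_set k m L U T \<omega>)"
proof (induction T)
  case 0
  then show ?case using m by simp
next
  case (Suc T)
  define S where "S = SCS_set k m L U T \<omega>"
  define Lm where "Lm = mth_largest m (image_mset (\<lambda>i. L i (Suc T) \<omega>) (mset_set S))"
  have S: "S \<subseteq> {1..k}" "m \<le> card S" using Suc S_def by auto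
  have fin: "finite S" using S(1) finite_subset by blast
  have eq: "SCS_set k m L U (Suc T) \<omega> = S - {i \<in> S. U i (Suc T) \<omega> < Lm}"
    by (simp add: S_def Lm_def Let_def)
  have "m \<le> size (filter_mset (\<lambda>x. Lm \<le> x) (image_mset (\<lambda>i. L i (Suc T) \<omega>) (mset_set S)))"
    unfolding Lm_def using mth_largest_count[OF m(1)] S fin by simp
  also have "\<dots> = card {i \<in> S. Lm \<le> L i (Suc T) \<omega>}"
    using fin by (simp add: filter_mset_image_mset filter_mset_mset_set)
  also have "\<dots> \<le> card (S - {i \<in> S. U i (Suc T) \<omega> < Lm})"
  proof (rule card_mono)
    show "finite (S - {i \<in> S. U i (Suc T) \<omega> < Lm})" using fin by simp
    show "{i \<in> S. Lm \<le> L i (Suc T) \<omega>} \<subseteq> S - {i \<in> S. U i (Suc T) \<omega> < Lm}"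
    proof
      fix i assume "i \<in> {i \<in> S. Lm \<le> L i (Suc T) \<omega>}"
      then have "i \<in> S" "Lm \<le> L i (Suc T) \<omega>" by auto
      moreover have "L i (Suc T) \<omega> \<le> U i (Suc T) \<omega>" using LU \<open>i \<in> S\<close> S(1) by auto
      ultimately show "i \<in> S - {i \<in> S. U i (Suc T) \<omega> < Lm}" by auto
    qed
  qed
  finally show ?case using eq S by auto
qed

theorem theorem3:
  fixes M :: "'a measure" and F :: "nat \<Rightarrow> 'a measure"
    and k m :: nat and \<alpha> :: real and \<theta> :: "nat \<Rightarrow> real"
    and L U :: "nat \<Rightarrow> real \<Rightarrow> nat \<Rightarrow> 'a \<Rightarrow> ereal"
    and \<tau> :: "'a \<Rightarrow> enat"
  assumes prob: "prob_space M"
    and filt_space: "\<And>T. T \<ge> 1 \<Longrightarrow> space (F T) = space M"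
    and filt_sub: "\<And>T. T \<ge> 1 \<Longrightarrow> sets (F T) \<subseteq> sets M"
    and filt_mono: "\<And>T T'. 1 \<le> T \<Longrightarrow> T \<le> T' \<Longrightarrow> sets (F T) \<subseteq> sets (F T')"
    and k: "k \<ge> 2" and m1: "1 \<le> m" and mk: "m < k"
    and \<alpha>: "0 < \<alpha>" "\<alpha> < 1"
    and \<theta>_ord: "\<And>i j. 1 \<le> i \<Longrightarrow> i \<le> j \<Longrightarrow> j \<le> k \<Longrightarrow> \<theta> j \<le> \<theta> i"
    and adaptedL: "\<And>i \<beta> T. i \<in> {1..k} \<Longrightarrow> 0 < \<beta> \<Longrightarrow> \<beta> < 1 \<Longrightarrow> T \<ge> 1 \<Longrightarrow>
                     L i \<beta> T \<in> borel_measurable (F T)"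
    and adaptedU: "\<And>i \<beta> T. i \<in> {1..k} \<Longrightarrow> 0 < \<beta> \<Longrightarrow> \<beta> < 1 \<Longrightarrow> T \<ge> 1 \<Longrightarrow>
                     U i \<beta> T \<in> borel_measurable (F T)"
    and LU: "\<And>i \<beta> T \<omega>. i \<in> {1..k} \<Longrightarrow> 0 < \<beta> \<Longrightarrow> \<beta> < 1 \<Longrightarrow> T \<ge> 1 \<Longrightarrow>
                     L i \<beta> T \<omega> \<le> U i \<beta> T \<omega>"
    and covL: "\<And>i \<beta>. i \<in> {1..k} \<Longrightarrow> 0 < \<beta> \<Longrightarrow> \<beta> < 1 \<Longrightarrow>
                 measure M {\<omega> \<in> space M. \<exists>T\<ge>1. ereal (\<theta> i) \<le> L i \<beta> T \<omega>} \<le> \<beta>"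
    and covU: "\<And>i \<beta>. i \<in> {1..k} \<Longrightarrow> 0 < \<beta> \<Longrightarrow> \<beta> < 1 \<Longrightarrow>
                 measure M {\<omega> \<in> space M. \<exists>T\<ge>1. ereal (\<theta> i) \<ge> U i \<beta> T \<omega>} \<le> \<beta>"
    and \<tau>_pos: "\<And>\<omega>. \<omega> \<in> space M \<Longrightarrow> \<tau> \<omega> \<ge> 1"
    and \<tau>_stop: "\<And>T. T \<ge> 1 \<Longrightarrow> {\<omega> \<in> space M. \<tau> \<omega> \<le> enat T} \<in> sets (F T)"
    and \<tau>_fin: "AE \<omega> in M. \<tau> \<omega> \<noteq> \<infinity>"
  shows "sFCR M L U \<theta>
           (SCS_set k m (\<lambda>i. L i (\<alpha> / (2 * real m * real (k - m))))
                        (\<lambda>i. U i (\<alpha> / (2 * real m * real (k - m)))))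
           \<tau> (real m * \<alpha> / (2 * real k)) \<le> \<alpha>"
proof -
  interpret prob_space M by (rule prob)
  define b where "b = \<alpha> / (2 * real m * real (k - m))"
  define a where "a = real m * \<alpha> / (2 * real k)"
  define S where "S = SCS_set k m (\<lambda>i. L i b) (\<lambda>i. U i b)"
  have km: "real (k - m) \<ge> 1" using mk by simp
  have mpos: "real m \<ge> 1" using m1 by simp
  have b01: "0 < b" "b < 1"
  proof -
    show "0 < b" unfolding b_def using \<alpha> km mpos by simp
    have "2 * real m * real (k - m) \<ge> 2" using km mpos
    proof -
      have "real m * real (k - m) \<ge> 1 * 1" using km mpos by (intro mult_mono) auto
      thus ?thesis by (simp add: mult.assoc del: of_nat_diff)
    qed
    hence "b \<le> \<alpha> / 2" unfolding b_def using \<alpha> by (intro divide_left_mono) (auto simp del: of_nat_diff)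
    thus "b < 1" using \<alpha> by simp
  qed
  have a01: "0 < a" "a < 1"
  proof -
    show "0 < a" unfolding a_def using \<alpha> mpos k by simp
    have "real m / real k < 1" using mk by simp
    moreover have "real m * \<alpha> / real k = (real m / real k) * \<alpha>" by simp
    moreover have "(real m / real k) * \<alpha> < 1 * 1" using \<alpha> \<open>real m / real k < 1\<close>
      by (intro mult_strict_mono') (auto simp: mult_less_cancel_left2)
    ultimately have "real m * \<alpha> / real k < 1" by simp
    moreover have "a = (real m * \<alpha> / real k) / 2" unfolding a_def by simp
    moreover have "y < 1 \<Longrightarrow> y / 2 < (1::real)" for y by simp
    ultimately show "a < 1" by metis
  qed
  have Sprop: "S T \<omega> \<subseteq> {1..k} \<and> m \<le> card (S T \<omega>)" for T \<omega>
    unfolding S_def by (rule SCS_props[OF m1 less_imp_le[OF mk]]) (rule LU, use b01 in auto)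
  define A where "A i = {\<omega>\<in>space M. \<exists>T\<ge>1. ereal (\<theta> i) \<le> L i a T \<omega>}" for i
  define B where "B i = {\<omega>\<in>space M. \<exists>T\<ge>1. ereal (\<theta> i) \<ge> U i a T \<omega>}" for i
  have Ameas: "A i \<in> sets M" if i: "i \<in> {1..k}" for i
  proof -
    have "A i = (\<Union>T. {\<omega>\<in>space (F (Suc T)). (\<lambda>_. ereal (\<theta> i)) \<omega> \<le> L i a (Suc T) \<omega>})"
      unfolding A_def using filt_space by (auto, metis Suc_pred not_one_le_zero le_simps(3) neq0_conv not_less_eq_eq)
    also have "\<dots> \<in> sets M"
    proof (rule sets.countable_UN, rule subsetI)
      fix X assume "X \<in> range (\<lambda>T. {\<omega>\<in>space (F (Suc T)). (\<lambda>_. ereal (\<theta> i)) \<omega> \<le> L i a (Suc T) \<omega>})"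
      then obtain T where X: "X = {\<omega>\<in>space (F (Suc T)). (\<lambda>_. ereal (\<theta> i)) \<omega> \<le> L i a (Suc T) \<omega>}" by auto
      have "X \<in> sets (F (Suc T))" unfolding X
        by (rule borel_measurable_le) (auto intro: adaptedL i a01)
      thus "X \<in> sets M" using filt_sub[of "Suc T"] by auto
    qed
    finally show ?thesis .
  qed
  have Bmeas: "B i \<in> sets M" if i: "i \<in> {1..k}" for i
  proof -
    have "B i = (\<Union>T. {\<omega>\<in>space (F (Suc T)). U i a (Suc T) \<omega> \<le> (\<lambda>_. ereal (\<theta> i)) \<omega>})"
      unfolding B_def using filt_space by (auto, metis Suc_pred not_one_le_zero le_simps(3) neq0_conv not_less_eq_eq)
    also have "\<dots> \<in> sets M"
    proof (rule sets.countable_UN, rule subsetI)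
      fix X assume "X \<in> range (\<lambda>T. {\<omega>\<in>space (F (Suc T)). U i a (Suc T) \<omega> \<le> (\<lambda>_. ereal (\<theta> i)) \<omega>})"
      then obtain T where X: "X = {\<omega>\<in>space (F (Suc T)). U i a (Suc T) \<omega> \<le> (\<lambda>_. ereal (\<theta> i)) \<omega>}" by auto
      have "X \<in> sets (F (Suc T))" unfolding X
        by (rule borel_measurable_le) (auto intro: adaptedU i a01)
      thus "X \<in> sets M" using filt_sub[of "Suc T"] by auto
    qed
    finally show ?thesis .
  qed
  define f where "f = (\<lambda>\<omega>. case \<tau> \<omega> of
        \<infinity> \<Rightarrow> 0
      | enat t \<Rightarrow> (\<Sum>i\<in>S t \<omega>.
            (if \<not> (L i a t \<omega> < ereal (\<theta> i) \<and> ereal (\<theta> i) < U i a t \<omega>) then 1 else 0))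
          / real (card (S t \<omega>)))"
  define g where "g = (\<lambda>\<omega>. (\<Sum>i\<in>{1..k}. indicator (A i) \<omega> + indicator (B i) \<omega>) / real m :: real)"
  have lhs: "sFCR M L U \<theta> S \<tau> a = integral\<^sup>L M f" unfolding sFCR_def f_def by simp
  have gint0: "integrable M (\<lambda>x. \<Sum>i\<in>{1..k}. indicator (A i) x + indicator (B i) x :: real)"
  proof (rule Bochner_Integration.integrable_sum)
    fix i assume i: "i \<in> {1..k}"
    show "integrable M (\<lambda>x. indicator (A i) x + indicator (B i) x :: real)"
      using Ameas[OF i] Bmeas[OF i]
      by (intro Bochner_Integration.integrable_add integrable_real_indicator) (auto simp: less_top[symmetric])
  qed
  have gint: "integrable M g" unfolding g_def using gint0 by (rule integrable_divide_zero)
  have gval: "integral\<^sup>L M g = (\<Sum>i\<in>{1..k}. prob (A i) + prob (B i)) / real m"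
  proof -
    have "integral\<^sup>L M (\<lambda>x. \<Sum>i\<in>{1..k}. indicator (A i) x + indicator (B i) x :: real)
        = (\<Sum>i\<in>{1..k}. integral\<^sup>L M (\<lambda>x. indicator (A i) x + indicator (B i) x :: real))"
      by (rule Bochner_Integration.integral_sum)
        (use Ameas Bmeas in \<open>auto intro!: Bochner_Integration.integrable_add integrable_real_indicator simp: less_top[symmetric]\<close>)
    also have "\<dots> = (\<Sum>i\<in>{1..k}. prob (A i) + prob (B i))"
    proof (rule sum.cong)
      fix i assume i: "i \<in> {1..k}"
      show "integral\<^sup>L M (\<lambda>x. indicator (A i) x + indicator (B i) x :: real) = prob (A i) + prob (B i)"
        using Ameas[OF i] Bmeas[OF i]
        by (subst Bochner_Integration.integral_add) (auto intro!: integrable_real_indicator simp: less_top[symmetric])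
    qed simp
    finally show ?thesis unfolding g_def by simp
  qed
  also have "\<dots> \<le> (\<Sum>i\<in>{1..k}. a + a) / real m"
    using covL[OF _ a01] covU[OF _ a01] unfolding A_def B_def
    by (intro divide_right_mono sum_mono add_mono) auto
  also have "\<dots> = \<alpha>" unfolding a_def using mpos k by (simp add: field_simps)
  finally have gle: "integral\<^sup>L M g \<le> \<alpha>" .
  have fg: "f \<omega> \<le> g \<omega>" if \<omega>: "\<omega> \<in> space M" for \<omega>
  proof (cases "\<tau> \<omega>")
    case infinity
    have "0 \<le> g \<omega>" unfolding g_def by (intro divide_nonneg_nonneg sum_nonneg add_nonneg_nonneg) auto
    then show ?thesis unfolding f_def using infinity by simp
  next
    case (enat t)
    have t1: "t \<ge> 1" using \<tau>_pos[OF \<omega>] enat by (simp add: one_enat_def)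
    let ?I = "\<lambda>i. (if \<not> (L i a t \<omega> < ereal (\<theta> i) \<and> ereal (\<theta> i) < U i a t \<omega>) then 1 else 0 :: real)"
    have sub: "S t \<omega> \<subseteq> {1..k}" and cm: "m \<le> card (S t \<omega>)" using Sprop by auto
    have "f \<omega> = (\<Sum>i\<in>S t \<omega>. ?I i) / real (card (S t \<omega>))" unfolding f_def using enat by simp
    also have "\<dots> \<le> (\<Sum>i\<in>S t \<omega>. ?I i) / real m"
      using cm mpos by (intro divide_left_mono sum_nonneg) auto
    also have "(\<Sum>i\<in>S t \<omega>. ?I i) \<le> (\<Sum>i\<in>{1..k}. ?I i)"
      using sub by (intro sum_mono2) auto
    also have "\<dots> \<le> (\<Sum>i\<in>{1..k}. indicator (A i) \<omega> + indicator (B i) \<omega>)"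
    proof (rule sum_mono)
      fix i assume "i \<in> {1..k}"
      show "?I i \<le> indicator (A i) \<omega> + indicator (B i) \<omega>"
      proof (cases "L i a t \<omega> < ereal (\<theta> i) \<and> ereal (\<theta> i) < U i a t \<omega>")
        case True then show ?thesis by (simp add: indicator_def)
      next
        case False
        then have "\<omega> \<in> A i \<or> \<omega> \<in> B i" unfolding A_def B_def using \<omega> t1 by (auto simp: not_less)
        then show ?thesis using False by (auto simp: indicator_def)
      qed
    qed
    finally show ?thesis unfolding g_def using mpos by (simp add: divide_right_mono)
  qed
  show ?thesis
  proof (cases "integrable M f")
    case True
    have "integral\<^sup>L M f \<le> integral\<^sup>L M g" using True gint fg by (rule integral_mono)
    then show ?thesis unfolding S_def[symmetric] a_def[symmetric] b_def[symmetric] lhs using gle by simp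
  next
    case False
    then show ?thesis unfolding S_def[symmetric] a_def[symmetric] b_def[symmetric] lhs
      using not_integrable_integral_eq[OF False] \<alpha> by simp
  qed
qed

end
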